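(* Let $d\ge1$, let $H$ be a hypergraph of $d$-intervals and let $w$ be a weight system on $H$. Then $\tau^*_w(H)\le 2d\,\nu_w(H)$.
   Context: A $d$-interval is a union of at most $d$ pairwise disjoint closed intervals of the real line $\mathbb{R}$. A hypergraph of $d$-intervals is a finite family $H$ of $d$-intervals, regarded as a hypergraph whose vertices are the points of $\mathbb{R}$ and whose edges are the members of $H$. A matching is a set of pairwise disjoint edges. A weight system on $H$ is a function $w:H\to\mathbb{N}$. $\nu_w(H)$ is the maximum of $\sum_{h\in M}w(h)$ over all matchings $M\subseteq H$. A fractional $w$-cover is a finitely supported function $g:\mathbb{R}\to\mathbb{R}_{\ge0}$ with $\sum_{v\in h}g(v)\ge w(h)$ for every $h\in H$; $\tau^*_w(H)$ is the infimum of $\sum_v g(v)$ over all fractional $w$-covers (equivalently, by LP duality, the supremum of $\sum_{h\in H}w(h)f(h)$ over all $f:H\to\mathbb{R}_{\ge0}$ with $\sum_{h\ni v}f(h)\le1$ for every point $v$). *)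

theory Defs
  imports Complex_Main
begin

definition d_interval :: "nat \<Rightarrow> real set \<Rightarrow> bool" where
  "d_interval d S \<longleftrightarrow>
     (\<exists>ivs :: (real \<times> real) list.
        1 \<le> length ivs \<and> length ivs \<le> d \<and>
        (\<forall>i < length ivs. fst (ivs ! i) \<le> snd (ivs ! i)) \<and>
        (\<forall>i < length ivs. \<forall>j < length ivs. i \<noteq> j \<longrightarrow>
            {fst (ivs ! i) .. snd (ivs ! i)} \<inter> {fst (ivs ! j) .. snd (ivs ! j)} = {}) \<and>
        S = (\<Union>i < length ivs. {fst (ivs ! i) .. snd (ivs ! i)}))"

text \<open>A hypergraph is a finite family of edges, indexed by a finite set H with edge map E.
  A matching is a set of members with pairwise disjoint edges.\<close>
definition matching :: "('h \<Rightarrow> real set) \<Rightarrow> 'h set \<Rightarrow> 'h set \<Rightarrow> bool" where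
  "matching E H M \<longleftrightarrow> M \<subseteq> H \<and> (\<forall>h\<in>M. \<forall>h'\<in>M. h \<noteq> h' \<longrightarrow> E h \<inter> E h' = {})"

definition nu_w :: "('h \<Rightarrow> real set) \<Rightarrow> 'h set \<Rightarrow> ('h \<Rightarrow> nat) \<Rightarrow> nat" where
  "nu_w E H w = Max ((\<lambda>M. \<Sum>h\<in>M. w h) ` {M. matching E H M})"

definition frac_cover :: "('h \<Rightarrow> real set) \<Rightarrow> 'h set \<Rightarrow> ('h \<Rightarrow> nat) \<Rightarrow> (real \<Rightarrow> real) \<Rightarrow> bool" where
  "frac_cover E H w g \<longleftrightarrow>
     finite {v. g v \<noteq> 0} \<and> (\<forall>v. 0 \<le> g v) \<and>
     (\<forall>h\<in>H. (\<Sum>v\<in>E h \<inter> {v. g v \<noteq> 0}. g v) \<ge> real (w h))"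

definition tau_star_w :: "('h \<Rightarrow> real set) \<Rightarrow> 'h set \<Rightarrow> ('h \<Rightarrow> nat) \<Rightarrow> real" where
  "tau_star_w E H w = Inf ((\<lambda>g. \<Sum>v\<in>{v. g v \<noteq> 0}. g v) ` {g. frac_cover E H w g})"

end

theory Submission
  imports Defs
begin


definition feas :: "'i set \<Rightarrow> (('i\<Rightarrow>real)\<times>real) set \<Rightarrow> bool" where
  "feas I K \<longleftrightarrow> (\<exists>x. \<forall>k\<in>K. (\<Sum>i\<in>I. fst k i * x i) \<le> snd k)"

inductive_set cone :: "(('i\<Rightarrow>real)\<times>real) set \<Rightarrow> (('i\<Rightarrow>real)\<times>real) set" for K where
  cone0: "((\<lambda>_. 0), 0) \<in> cone K"
| coneS: "c \<in> cone K \<Longrightarrow> k \<in> K \<Longrightarrow> t \<ge> 0 \<Longrightarrow>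
     ((\<lambda>i. fst c i + t * fst k i), snd c + t * snd k) \<in> cone K"

lemma cone_base: "k \<in> K \<Longrightarrow> k \<in> cone K"
  using coneS[OF cone0, of k K 1] by simp

lemma cone_add: "c2 \<in> cone K \<Longrightarrow> c1 \<in> cone K \<Longrightarrow>
   ((\<lambda>i. fst c1 i + fst c2 i), snd c1 + snd c2) \<in> cone K"
proof (induction rule: cone.induct)
  case cone0 then show ?case by simp
next
  case (coneS c k t)
  have "((\<lambda>i. fst ((\<lambda>i. fst c1 i + fst c i), snd c1 + snd c) i + t * fst k i),
      snd ((\<lambda>i. fst c1 i + fst c i), snd c1 + snd c) + t * snd k) \<in> cone K"
    using coneS by (intro cone.coneS) auto
  then show ?case by (simp add: add.assoc)
qed

lemma cone_scale: "c \<in> cone K \<Longrightarrow> s \<ge> 0 \<Longrightarrow> ((\<lambda>i. s * fst c i), s * snd c) \<in> cone K"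
proof (induction rule: cone.induct)
  case cone0 then show ?case using cone.cone0 by simp
next
  case (coneS c k t)
  have "((\<lambda>i. fst ((\<lambda>i. s * fst c i), s * snd c) i + (s*t) * fst k i),
      snd ((\<lambda>i. s * fst c i), s * snd c) + (s*t) * snd k) \<in> cone K"
    using coneS by (intro cone.coneS) auto
  then show ?case by (simp add: algebra_simps)
qed

lemma cone_mono: "v \<in> cone K' \<Longrightarrow> K' \<subseteq> cone K \<Longrightarrow> v \<in> cone K"
proof (induction rule: cone.induct)
  case cone0 then show ?case by (simp add: cone.cone0)
next
  case (coneS c k t)
  have "((\<lambda>i. t * fst k i), t * snd k) \<in> cone K" using coneS by (intro cone_scale) auto
  from cone_add[OF this] coneS show ?case by auto
qed

lemma cone_coord: "v \<in> cone K \<Longrightarrow> \<forall>k\<in>K. fst k j = 0 \<Longrightarrow> fst v j = 0"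
  by (induction rule: cone.induct) auto

lemma sep_lemma:
  fixes ap an sp sn bp bn :: real
  assumes "ap > 0" "an < 0" "(- an) * sp + ap * sn \<le> (- an) * bp + ap * bn"
  shows "(bn - sn) / an \<le> (bp - sp) / ap"
proof -
  have h: "(bp - sp)*an \<le> (bn - sn)*ap" using assms(3) by (simp add: algebra_simps)
  then show ?thesis using assms(1,2) by (simp add: divide_simps)
qed

lemma pos_case: "(a::real) > 0 \<Longrightarrow> xj \<le> (b - s)/a \<Longrightarrow> a * xj + s \<le> b"
  by (simp add: le_divide_eq algebra_simps)
lemma neg_case: "(a::real) < 0 \<Longrightarrow> (b - s)/a \<le> xj \<Longrightarrow> a * xj + s \<le> b"
  by (simp add: divide_le_eq algebra_simps)

lemma FM:
  assumes "finite I" "finite K" "\<not> feas I K"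
  shows "\<exists>v\<in>cone K. (\<forall>i\<in>I. fst v i = 0) \<and> snd v < 0"
  using assms
proof (induction I arbitrary: K rule: finite_induct)
  case empty
  then obtain k where "k \<in> K" "\<not> 0 \<le> snd k" unfolding feas_def by auto
  then show ?case using cone_base[of k K] by (intro bexI[of _ k]) auto
next
  case (insert j I)
  define K0 where "K0 = {k\<in>K. fst k j = 0}"
  define Kp where "Kp = {k\<in>K. fst k j > 0}"
  define Kn where "Kn = {k\<in>K. fst k j < 0}"
  define comb where "comb = (\<lambda>(p::('a\<Rightarrow>real)\<times>real, n::('a\<Rightarrow>real)\<times>real).
     ((\<lambda>i. (- fst n j) * fst p i + fst p j * fst n i), (- fst n j)*snd p + fst p j * snd n))"
  define K' where "K' = K0 \<union> comb ` (Kp \<times> Kn)"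
  have "finite K0" "finite Kp" "finite Kn" unfolding K0_def Kp_def Kn_def using insert.prems(1) by auto
  then have fin: "finite K'" unfolding K'_def by simp
  have nf: "\<not> feas I K'"
  proof
    assume "feas I K'"
    then obtain x where x: "\<forall>k\<in>K'. (\<Sum>i\<in>I. fst k i * x i) \<le> snd k" unfolding feas_def by auto
    define s where "s k = (\<Sum>i\<in>I. fst k i * x i)" for k :: "('a\<Rightarrow>real)\<times>real"
    define U where "U k = (snd k - s k) / fst k j" for k
    define xj where "xj = (if Kn = {} then (if Kp = {} then 0 else Min (U ` Kp)) else Max (U ` Kn))"
    have finp: "finite Kp" "finite Kn" unfolding Kp_def Kn_def using insert.prems(1) by auto
    have LU: "U n \<le> U p" if "p \<in> Kp" "n \<in> Kn" for p n
    proof -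
      have "comb (p,n) \<in> K'" unfolding K'_def using that by auto
      then have "s (comb (p,n)) \<le> snd (comb (p,n))" using x unfolding s_def by blast
      moreover have "s (comb (p,n)) = (- fst n j) * s p + fst p j * s n"
      proof -
        have "s (comb (p,n)) = (\<Sum>i\<in>I. (- fst n j) * (fst p i * x i) + fst p j * (fst n i * x i))"
          unfolding s_def comb_def by (intro sum.cong) (auto simp: algebra_simps)
        also have "\<dots> = (- fst n j) * s p + fst p j * s n"
          unfolding s_def sum.distrib sum_distrib_left ..
        finally show ?thesis .
      qed
      ultimately have "(- fst n j) * s p + fst p j * s n \<le> (- fst n j)*snd p + fst p j * snd n"
        unfolding comb_def by simp
      then show ?thesis unfolding U_def
        using that unfolding Kp_def Kn_def by (intro sep_lemma) auto
    qed
    define x' where "x' = x(j := xj)"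
    have "\<forall>k\<in>K. (\<Sum>i\<in>insert j I. fst k i * x' i) \<le> snd k"
    proof
      fix k assume kK: "k \<in> K"
      have eq: "(\<Sum>i\<in>insert j I. fst k i * x' i) = fst k j * xj + s k"
        using insert.hyps unfolding x'_def s_def
        by (simp add: sum.insert) (intro sum.cong, auto)
      consider "fst k j = 0" | "fst k j > 0" | "fst k j < 0" by linarith
      then show "(\<Sum>i\<in>insert j I. fst k i * x' i) \<le> snd k"
      proof cases
        case 1
        then have "k \<in> K'" unfolding K'_def K0_def using kK by auto
        then have "s k \<le> snd k" using x unfolding s_def by blast
        then show ?thesis using 1 eq by simp
      next
        case 2
        then have kp: "k \<in> Kp" unfolding Kp_def using kK by auto
        have "xj \<le> U k"
        proof (cases "Kn = {}")
          case True
          then show ?thesis unfolding xj_def using kp finp by (auto intro: Min_le)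
        next
          case False
          then have "Max (U ` Kn) \<in> U ` Kn" using finp by (intro Max_in) auto
          then obtain n where "n \<in> Kn" "Max (U ` Kn) = U n" by auto
          then show ?thesis unfolding xj_def using False LU[OF kp] by auto
        qed
        then show ?thesis unfolding eq U_def using 2 by (intro pos_case) auto
      next
        case 3
        then have kn: "k \<in> Kn" unfolding Kn_def using kK by auto
        then have "U k \<le> xj" unfolding xj_def using finp by (auto intro: Max_ge)
        then show ?thesis unfolding eq U_def using 3 by (intro neg_case) auto
      qed
    qed
    then show False using insert.prems(2) unfolding feas_def by blast
  qed
  obtain v where v: "v \<in> cone K'" "\<forall>i\<in>I. fst v i = 0" "snd v < 0"
    using insert.IH[OF fin nf] by auto
  have sub: "K' \<subseteq> cone K"
  proof
    fix k assume "k \<in> K'"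
    then consider "k \<in> K0" | p n where "p \<in> Kp" "n \<in> Kn" "k = comb (p,n)"
      unfolding K'_def by auto
    then show "k \<in> cone K"
    proof cases
      case 1 then show ?thesis unfolding K0_def by (intro cone_base) auto
    next
      case 2
      have a: "((\<lambda>i. (- fst n j) * fst p i), (- fst n j) * snd p) \<in> cone K"
        using 2 unfolding Kp_def Kn_def by (intro cone_scale cone_base) auto
      have b: "((\<lambda>i. fst p j * fst n i), fst p j * snd n) \<in> cone K"
        using 2 unfolding Kp_def Kn_def by (intro cone_scale cone_base) auto
      show ?thesis using cone_add[OF b a] 2 unfolding comb_def by simp
    qed
  qed
  have "\<forall>k\<in>K'. fst k j = 0" unfolding K'_def K0_def comb_def by auto
  then have "fst v j = 0" by (rule cone_coord[OF v(1)])
  then have "(\<forall>i\<in>insert j I. fst v i = 0) \<and> snd v < 0" using v(2,3) by simp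
  then show ?case using cone_mono[OF v(1) sub] by blast
qed



lemma exists_h0:
  fixes f :: "'h \<Rightarrow> real" and E L :: "'h \<Rightarrow> real set"
  assumes fin: "finite H" and fpos: "\<forall>h\<in>H. f h \<ge> 0"
    and Lfin: "\<forall>h\<in>H. finite (L h) \<and> card (L h) \<le> d"
    and inter: "\<forall>h\<in>H. \<forall>h'\<in>H. E h \<inter> E h' \<noteq> {} \<longrightarrow> (\<exists>l\<in>L h. l \<in> E h') \<or> (\<exists>l\<in>L h'. l \<in> E h)"
    and frac: "\<forall>h\<in>H. \<forall>l\<in>L h. (\<Sum>h'\<in>H. if l \<in> E h' then f h' else 0) \<le> 1"
    and pos: "(\<Sum>h\<in>H. f h) > 0"
  shows "\<exists>h0\<in>H. f h0 > 0 \<and> (\<Sum>h\<in>H. if E h \<inter> E h0 \<noteq> {} then f h else 0) \<le> 2 * real d"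
proof (rule ccontr)
  assume con: "\<not> ?thesis"
  define N where "N h0 = (\<Sum>h\<in>H. if E h \<inter> E h0 \<noteq> {} then f h else 0)" for h0
  define A where "A h0 h = (if \<exists>l\<in>L h0. l \<in> E h then 1 else 0::real)" for h0 h
  have "\<exists>a\<in>H. f a > 0"
  proof (rule ccontr)
    assume "\<not> (\<exists>a\<in>H. f a > 0)"
    then have "\<forall>h\<in>H. f h \<le> 0" by (meson not_le)
    then have "(\<Sum>h\<in>H. f h) \<le> 0" by (simp add: sum_nonpos)
    then show False using pos by simp
  qed
  then obtain a where a: "a \<in> H" "f a > 0" by auto
  have lower: "(\<Sum>h0\<in>H. f h0 * (2 * real d)) < (\<Sum>h0\<in>H. f h0 * N h0)"
  proof (rule sum_strict_mono_ex1[OF fin])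
    show "\<forall>x\<in>H. f x * (2 * real d) \<le> f x * N x"
    proof
      fix x assume "x \<in> H"
      then show "f x * (2 * real d) \<le> f x * N x"
      proof (cases "f x > 0")
        case True
        then show ?thesis using con \<open>x \<in> H\<close> unfolding N_def
          by (intro mult_left_mono) (auto simp: not_le)
      next
        case False
        then have "f x = 0" using fpos \<open>x \<in> H\<close> by force
        then show ?thesis by simp
      qed
    qed
    show "\<exists>a\<in>H. f a * (2 * real d) < f a * N a"
      using a con unfolding N_def by (intro bexI[of _ a]) (auto simp: not_le)
  qed
  have ind: "(if E h \<inter> E h0 \<noteq> {} then 1 else 0) \<le> A h0 h + A h h0" if "h \<in> H" "h0 \<in> H" for h h0
    using inter that unfolding A_def by (auto simp: Int_commute)
  have "(\<Sum>h0\<in>H. f h0 * N h0) = (\<Sum>h0\<in>H. \<Sum>h\<in>H. f h0 * f h * (if E h \<inter> E h0 \<noteq> {} then 1 else 0))"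
    unfolding N_def by (simp add: sum_distrib_left if_distrib cong: if_cong)
  also have "\<dots> \<le> (\<Sum>h0\<in>H. \<Sum>h\<in>H. f h0 * f h * (A h0 h + A h h0))"
    using fpos ind by (intro sum_mono mult_left_mono) auto
  also have "\<dots> = (\<Sum>h0\<in>H. \<Sum>h\<in>H. f h0 * f h * A h0 h) + (\<Sum>h0\<in>H. \<Sum>h\<in>H. f h0 * f h * A h h0)"
    by (simp add: distrib_left sum.distrib)
  also have "(\<Sum>h0\<in>H. \<Sum>h\<in>H. f h0 * f h * A h h0) = (\<Sum>h0\<in>H. \<Sum>h\<in>H. f h0 * f h * A h0 h)"
    by (subst sum.swap) (simp add: mult.commute mult.left_commute)
  also have "(\<Sum>h0\<in>H. \<Sum>h\<in>H. f h0 * f h * A h0 h) \<le> (\<Sum>h0\<in>H. f h0 * real d)"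
  proof (rule sum_mono)
    fix h0 assume h0: "h0 \<in> H"
    have "(\<Sum>h\<in>H. f h * A h0 h) \<le> (\<Sum>h\<in>H. \<Sum>l\<in>L h0. if l \<in> E h then f h else 0)"
    proof (rule sum_mono)
      fix h assume h: "h \<in> H"
      show "f h * A h0 h \<le> (\<Sum>l\<in>L h0. if l \<in> E h then f h else 0)"
      proof (cases "\<exists>l\<in>L h0. l \<in> E h")
        case True
        then obtain l where l: "l \<in> L h0" "l \<in> E h" by auto
        have "(if l \<in> E h then f h else 0) \<le> (\<Sum>l\<in>L h0. if l \<in> E h then f h else 0)"
          using Lfin h0 l fpos h by (intro member_le_sum) auto
        then show ?thesis using l unfolding A_def by auto
      next
        case False
        then show ?thesis unfolding A_def using fpos h by (auto intro: sum_nonneg)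
      qed
    qed
    also have "\<dots> = (\<Sum>l\<in>L h0. \<Sum>h\<in>H. if l \<in> E h then f h else 0)" by (rule sum.swap)
    also have "\<dots> \<le> (\<Sum>l\<in>L h0. 1)" using frac h0 by (intro sum_mono) auto
    also have "\<dots> \<le> real d" using Lfin h0 by auto
    finally have "(\<Sum>h\<in>H. f h * A h0 h) \<le> real d" .
    then have "f h0 * (\<Sum>h\<in>H. f h * A h0 h) \<le> f h0 * real d"
      using fpos h0 by (intro mult_left_mono) auto
    then show "(\<Sum>h\<in>H. f h0 * f h * A h0 h) \<le> f h0 * real d"
      by (simp add: sum_distrib_left mult.assoc)
  qed
  finally have "(\<Sum>h0\<in>H. f h0 * N h0) \<le> 2 * (\<Sum>h0\<in>H. f h0 * real d)" by simp
  then show False using lower by (simp add: sum_distrib_left mult_ac)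
qed

lemma matching_mono: "matching E H' M \<Longrightarrow> H' \<subseteq> H \<Longrightarrow> matching E H M"
  unfolding matching_def by auto

lemma LR:
  fixes f w :: "'h \<Rightarrow> real" and E L :: "'h \<Rightarrow> real set"
  assumes "finite H" "\<forall>h\<in>H. f h \<ge> 0" "\<forall>h\<in>H. w h \<ge> 0"
    and "\<forall>h\<in>H. finite (L h) \<and> card (L h) \<le> d"
    and "\<forall>h\<in>H. \<forall>h'\<in>H. E h \<inter> E h' \<noteq> {} \<longrightarrow> (\<exists>l\<in>L h. l \<in> E h') \<or> (\<exists>l\<in>L h'. l \<in> E h)"
    and "\<forall>h\<in>H. \<forall>l\<in>L h. (\<Sum>h'\<in>H. if l \<in> E h' then f h' else 0) \<le> 1"
    and "\<forall>h\<in>H. E h \<noteq> {}"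
  shows "\<exists>M. matching E H M \<and> (\<Sum>h\<in>H. f h * w h) \<le> 2 * real d * (\<Sum>h\<in>M. w h)"
  using assms
proof (induction "card H" arbitrary: H w rule: less_induct)
  case less
  note fin = less.prems(1) and fpos = less.prems(2) and wpos = less.prems(3)
    and Lfin = less.prems(4) and inter = less.prems(5) and frac = less.prems(6) and ne = less.prems(7)
  have sub_frac: "\<forall>h\<in>H'. \<forall>l\<in>L h. (\<Sum>h'\<in>H'. if l \<in> E h' then f h' else 0) \<le> 1"
    if "H' \<subseteq> H" for H'
  proof (intro ballI)
    fix h l assume "h \<in> H'" "l \<in> L h"
    have "(\<Sum>h'\<in>H'. if l \<in> E h' then f h' else 0) \<le> (\<Sum>h'\<in>H. if l \<in> E h' then f h' else 0)"
      using that fin fpos by (intro sum_mono2) auto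
    also have "\<dots> \<le> 1" using frac that \<open>h \<in> H'\<close> \<open>l \<in> L h\<close> by auto
    finally show "(\<Sum>h'\<in>H'. if l \<in> E h' then f h' else 0) \<le> 1" .
  qed
  have inter_sub: "\<forall>h\<in>H'. \<forall>h'\<in>H'. E h \<inter> E h' \<noteq> {} \<longrightarrow> (\<exists>l\<in>L h. l \<in> E h') \<or> (\<exists>l\<in>L h'. l \<in> E h)"
    if "H' \<subseteq> H" for H' using inter that by blast
  define H' where "H' = {h\<in>H. w h > 0}"
  show ?case
  proof (cases "H' = H")
    case False
    then have lt: "card H' < card H" unfolding H'_def using fin
      by (intro psubset_card_mono) auto
    have sub: "H' \<subseteq> H" unfolding H'_def by auto
    obtain M where M: "matching E H' M" "(\<Sum>h\<in>H'. f h * w h) \<le> 2 * real d * (\<Sum>h\<in>M. w h)"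
    proof -
      have "\<exists>M. matching E H' M \<and> (\<Sum>h\<in>H'. f h * w h) \<le> 2 * real d * (\<Sum>h\<in>M. w h)"
        by (rule less.hyps[OF lt])
          (use fin sub fpos wpos Lfin sub_frac[OF sub] inter_sub[OF sub] ne in \<open>auto intro: finite_subset\<close>)
      then show ?thesis using that by blast
    qed
    have "(\<Sum>h\<in>H. f h * w h) = (\<Sum>h\<in>H'. f h * w h)"
      unfolding H'_def using fin wpos by (intro sum.mono_neutral_right) auto
    then show ?thesis using M matching_mono[OF M(1) sub] by auto
  next
    case True
    then have wp: "\<forall>h\<in>H. w h > 0" unfolding H'_def by auto
    show ?thesis
    proof (cases "(\<Sum>h\<in>H. f h) > 0")
      case False
      then have "\<forall>h\<in>H. f h = 0" using fpos fin
        by (metis not_less sum_nonneg_eq_0_iff order_antisym sum_nonneg)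
      then show ?thesis by (intro exI[of _ "{}"]) (auto simp: matching_def)
    next
      case True
      obtain h0 where h0: "h0 \<in> H" "f h0 > 0"
        "(\<Sum>h\<in>H. if E h \<inter> E h0 \<noteq> {} then f h else 0) \<le> 2 * real d"
        using exists_h0[OF fin fpos Lfin inter frac True] by auto
      define w1 where "w1 h = (if E h \<inter> E h0 \<noteq> {} then w h0 else 0)" for h
      define w2 where "w2 h = w h - w1 h" for h
      define H2 where "H2 = {h\<in>H. w2 h > 0}"
      have h0n: "h0 \<notin> H2" unfolding H2_def w2_def w1_def using wp h0 ne by auto
      have sub2: "H2 \<subseteq> H" unfolding H2_def by auto
      have lt: "card H2 < card H" using fin sub2 h0n h0(1) by (intro psubset_card_mono) auto
      obtain M2 where M2: "matching E H2 M2" "(\<Sum>h\<in>H2. f h * w2 h) \<le> 2 * real d * (\<Sum>h\<in>M2. w2 h)"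
      proof -
        have "\<exists>M. matching E H2 M \<and> (\<Sum>h\<in>H2. f h * w2 h) \<le> 2 * real d * (\<Sum>h\<in>M. w2 h)"
          by (rule less.hyps[OF lt])
            (use fin sub2 fpos Lfin sub_frac[OF sub2] inter_sub[OF sub2] ne in \<open>auto intro: finite_subset simp: H2_def\<close>)
        then show ?thesis using that by blast
      qed
      have M2H: "M2 \<subseteq> H" using M2(1) sub2 unfolding matching_def by auto
      have finM2: "finite M2" using M2H fin finite_subset by auto
      have w1n: "w1 h \<ge> 0" if "h \<in> H" for h using wp h0 unfolding w1_def by auto
      have step1: "(\<Sum>h\<in>H. f h * w h) \<le> 2 * real d * w h0 + 2 * real d * (\<Sum>h\<in>M2. w2 h)"
      proof -
        have "(\<Sum>h\<in>H. f h * w h) = (\<Sum>h\<in>H. f h * w1 h) + (\<Sum>h\<in>H. f h * w2 h)"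
          unfolding w2_def by (simp add: right_diff_distrib sum_subtractf)
        also have "(\<Sum>h\<in>H. f h * w1 h) = w h0 * (\<Sum>h\<in>H. if E h \<inter> E h0 \<noteq> {} then f h else 0)"
          unfolding w1_def by (simp add: sum_distrib_left if_distrib mult.commute cong: if_cong)
        also have "\<dots> \<le> w h0 * (2 * real d)" using h0 wp by (intro mult_left_mono) auto
        also have "(\<Sum>h\<in>H. f h * w2 h) \<le> (\<Sum>h\<in>H2. f h * w2 h)"
        proof -
          have "(\<Sum>h\<in>H. f h * w2 h) = (\<Sum>h\<in>H2. f h * w2 h) + (\<Sum>h\<in>H-H2. f h * w2 h)"
            using fin sub2 by (metis add.commute sum.subset_diff)
          moreover have "(\<Sum>h\<in>H-H2. f h * w2 h) \<le> 0"
            using fpos unfolding H2_def by (intro sum_nonpos) (auto simp: mult_nonneg_nonpos)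
          ultimately show ?thesis by simp
        qed
        finally show ?thesis using M2(2) by (simp add: algebra_simps)
      qed
      show ?thesis
      proof (cases "\<exists>h1\<in>M2. E h1 \<inter> E h0 \<noteq> {}")
        case True
        then obtain h1 where h1: "h1 \<in> M2" "E h1 \<inter> E h0 \<noteq> {}" by auto
        have "(\<Sum>h\<in>M2. w h) = (\<Sum>h\<in>M2. w1 h) + (\<Sum>h\<in>M2. w2 h)"
          unfolding w2_def by (simp add: sum_subtractf)
        moreover have "w1 h1 \<le> (\<Sum>h\<in>M2. w1 h)"
          using finM2 h1 w1n M2H by (intro member_le_sum) auto
        moreover have "w1 h1 = w h0" using h1 unfolding w1_def by auto
        ultimately have "w h0 + (\<Sum>h\<in>M2. w2 h) \<le> (\<Sum>h\<in>M2. w h)" by simp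
        then have "2 * real d * (w h0 + (\<Sum>h\<in>M2. w2 h)) \<le> 2 * real d * (\<Sum>h\<in>M2. w h)"
          by (intro mult_left_mono) auto
        then show ?thesis using step1 matching_mono[OF M2(1) sub2]
          by (intro exI[of _ M2]) (auto simp: algebra_simps)
      next
        case False
        have h0M2: "h0 \<notin> M2" using M2(1) h0n unfolding matching_def by auto
        have m: "matching E H (insert h0 M2)"
          using M2(1) sub2 False h0(1) unfolding matching_def by (auto simp: Int_commute)
        have "(\<Sum>h\<in>M2. w2 h) = (\<Sum>h\<in>M2. w h)"
          using False unfolding w2_def w1_def by (intro sum.cong) auto
        then have "(\<Sum>h\<in>insert h0 M2. w h) = w h0 + (\<Sum>h\<in>M2. w2 h)"
          using finM2 h0M2 by simp
        then show ?thesis using step1 m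
          by (intro exI[of _ "insert h0 M2"]) (auto simp: algebra_simps)
      qed
    qed
  qed
qed



lemma cone_repr:
  fixes F :: "'s \<Rightarrow> ('i\<Rightarrow>real)\<times>real"
  assumes "v \<in> cone (F ` S)" "finite S"
  shows "\<exists>y. (\<forall>s. y s \<ge> 0) \<and> (\<forall>i. fst v i = (\<Sum>s\<in>S. y s * fst (F s) i))
              \<and> snd v = (\<Sum>s\<in>S. y s * snd (F s))"
  using assms(1)
proof (induction rule: cone.induct)
  case cone0
  show ?case by (intro exI[of _ "\<lambda>_. 0"]) simp
next
  case (coneS c k t)
  then obtain y where y: "\<forall>s. y s \<ge> 0" "\<forall>i. fst c i = (\<Sum>s\<in>S. y s * fst (F s) i)"
    "snd c = (\<Sum>s\<in>S. y s * snd (F s))" by blast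
  from coneS obtain s0 where s0: "s0 \<in> S" "k = F s0" by auto
  define y' where "y' s = y s + (if s = s0 then t else 0)" for s
  have gen: "(\<Sum>s\<in>S. y' s * G s) = (\<Sum>s\<in>S. y s * G s) + t * G s0" for G :: "'s \<Rightarrow> real"
  proof -
    have "(\<Sum>s\<in>S. y' s * G s) = (\<Sum>s\<in>S. y s * G s + (if s = s0 then t * G s else 0))"
      by (intro sum.cong) (auto simp: y'_def distrib_right)
    also have "\<dots> = (\<Sum>s\<in>S. y s * G s) + t * G s0"
      using s0 assms(2) by (simp add: sum.distrib)
    finally show ?thesis .
  qed
  have "\<forall>s. y' s \<ge> 0" using y(1) coneS unfolding y'_def by auto
  moreover have "fst c i + t * fst k i = (\<Sum>s\<in>S. y' s * fst (F s) i)" for i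
    using gen[of "\<lambda>s. fst (F s) i"] y(2) s0 by simp
  moreover have "snd c + t * snd k = (\<Sum>s\<in>S. y' s * snd (F s))"
    using gen[of "\<lambda>s. snd (F s)"] y(3) s0 by simp
  ultimately show ?case by (intro exI[of _ y']) simp
qed

lemma sum_split3:
  fixes g :: "('h + real) option \<Rightarrow> real"
  assumes "finite H" "finite P"
  shows "(\<Sum>s\<in>insert None (Some ` Inl ` H \<union> Some ` Inr ` P). g s)
    = g None + (\<Sum>h\<in>H. g (Some (Inl h))) + (\<Sum>p\<in>P. g (Some (Inr p)))"
proof -
  have "(\<Sum>s\<in>insert None (Some ` Inl ` H \<union> Some ` Inr ` P). g s)
      = g None + (\<Sum>s\<in>Some ` Inl ` H \<union> Some ` Inr ` P. g s)"
    using assms by (subst sum.insert) auto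
  also have "(\<Sum>s\<in>Some ` Inl ` H \<union> Some ` Inr ` P. g s)
      = (\<Sum>s\<in>Some ` Inl ` H. g s) + (\<Sum>s\<in>Some ` Inr ` P. g s)"
    using assms by (intro sum.union_disjoint) auto
  also have "(\<Sum>s\<in>Some ` Inl ` H. g s) = (\<Sum>h\<in>H. g (Some (Inl h)))"
    by (subst image_image, subst sum.reindex) (auto intro: inj_onI)
  also have "(\<Sum>s\<in>Some ` Inr ` P. g s) = (\<Sum>p\<in>P. g (Some (Inr p)))"
    by (subst image_image, subst sum.reindex) (auto intro: inj_onI)
  finally show ?thesis by simp
qed

definition good :: "nat \<Rightarrow> (real\<times>real) list \<Rightarrow> real set \<Rightarrow> bool" where
  "good d ivs S \<longleftrightarrow> 1 \<le> length ivs \<and> length ivs \<le> d \<and>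
        (\<forall>i < length ivs. fst (ivs ! i) \<le> snd (ivs ! i)) \<and>
        (\<forall>i < length ivs. \<forall>j < length ivs. i \<noteq> j \<longrightarrow>
            {fst (ivs ! i) .. snd (ivs ! i)} \<inter> {fst (ivs ! j) .. snd (ivs ! j)} = {}) \<and>
        S = (\<Union>i < length ivs. {fst (ivs ! i) .. snd (ivs ! i)})"

lemma d_interval_good: "d_interval d S \<longleftrightarrow> (\<exists>ivs. good d ivs S)"
  unfolding d_interval_def good_def by simp

definition Lset :: "(real\<times>real) list \<Rightarrow> real set" where
  "Lset ivs = (\<lambda>i. fst (ivs!i)) ` {..<length ivs}"

lemma good_L:
  assumes "good d ivs S"
  shows "finite (Lset ivs)" "card (Lset ivs) \<le> d" "Lset ivs \<subseteq> S" "Lset ivs \<noteq> {}"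
proof -
  show "finite (Lset ivs)" unfolding Lset_def by simp
  have "card (Lset ivs) \<le> card {..<length ivs}" unfolding Lset_def by (rule card_image_le) simp
  then show "card (Lset ivs) \<le> d" using assms unfolding good_def by simp
  show "Lset ivs \<subseteq> S" using assms unfolding good_def Lset_def by auto
  have "0 < length ivs" using assms unfolding good_def by linarith
  then show "Lset ivs \<noteq> {}" unfolding Lset_def by auto
qed

lemma good_inter:
  assumes "good d ivs S" "good d' ivs' S'" "S \<inter> S' \<noteq> {}"
  shows "(\<exists>l\<in>Lset ivs. l \<in> S') \<or> (\<exists>l\<in>Lset ivs'. l \<in> S)"
proof -
  obtain x where x: "x \<in> S" "x \<in> S'" using assms(3) by auto
  obtain i where i: "i < length ivs" "x \<in> {fst (ivs!i) .. snd (ivs!i)}"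
    using x(1) assms(1) unfolding good_def by auto
  obtain k where k: "k < length ivs'" "x \<in> {fst (ivs'!k) .. snd (ivs'!k)}"
    using x(2) assms(2) unfolding good_def by auto
  show ?thesis
  proof (cases "fst (ivs'!k) \<le> fst (ivs!i)")
    case True
    have "fst (ivs!i) \<in> {fst (ivs'!k) .. snd (ivs'!k)}" using k i True by auto
    then have "fst (ivs!i) \<in> S'" using assms(2) k(1) unfolding good_def by blast
    moreover have "fst (ivs!i) \<in> Lset ivs" using i unfolding Lset_def by auto
    ultimately show ?thesis by blast
  next
    case False
    have "fst (ivs'!k) \<in> {fst (ivs!i) .. snd (ivs!i)}" using k i False by auto
    then have "fst (ivs'!k) \<in> S" using assms(1) i(1) unfolding good_def by blast
    moreover have "fst (ivs'!k) \<in> Lset ivs'" using k unfolding Lset_def by auto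
    ultimately show ?thesis by blast
  qed
qed

lemma nu_ge:
  assumes "finite H" "matching E H M"
  shows "(\<Sum>h\<in>M. real (w h)) \<le> real (nu_w E H w)"
proof -
  have "{M. matching E H M} \<subseteq> Pow H" by (auto simp: matching_def)
  then have fin: "finite {M. matching E H M}"
    using assms(1) by (meson finite_Pow_iff finite_subset)
  have "(\<Sum>h\<in>M. w h) \<le> nu_w E H w"
    unfolding nu_w_def using fin assms(2) by (intro Max_ge) auto
  then show ?thesis by (simp flip: of_nat_sum)
qed

theorem theorem1p8:
  fixes d :: nat and H :: "'h set" and E :: "'h \<Rightarrow> real set" and w :: "'h \<Rightarrow> nat"
  assumes "d \<ge> 1"
    and "finite H"
    and "\<forall>h\<in>H. d_interval d (E h)"
  shows "tau_star_w E H w \<le> 2 * real d * real (nu_w E H w)"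
proof -
  note finH = assms(2)
  obtain IV where IV: "\<forall>h\<in>H. good d (IV h) (E h)"
    using assms(3) unfolding d_interval_good by metis
  define L where "L h = Lset (IV h)" for h
  have Lfin: "\<forall>h\<in>H. finite (L h) \<and> card (L h) \<le> d" using IV good_L unfolding L_def by blast
  have LE: "\<forall>h\<in>H. L h \<subseteq> E h" using IV good_L unfolding L_def by blast
  have Lne: "\<forall>h\<in>H. L h \<noteq> {}" using IV good_L unfolding L_def by blast
  have Ene: "\<forall>h\<in>H. E h \<noteq> {}" using LE Lne by blast
  have inter: "\<forall>h\<in>H. \<forall>h'\<in>H. E h \<inter> E h' \<noteq> {} \<longrightarrow> (\<exists>l\<in>L h. l \<in> E h') \<or> (\<exists>l\<in>L h'. l \<in> E h)"
    using IV good_inter unfolding L_def by blast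
  define P where "P = (\<Union>h\<in>H. L h)"
  have finP: "finite P" unfolding P_def using finH Lfin by auto
  define T where "T = 2 * real d * real (nu_w E H w)"
  define F :: "('h + real) option \<Rightarrow> (real \<Rightarrow> real) \<times> real" where
    "F s = (case s of None \<Rightarrow> ((\<lambda>_. 1), T)
       | Some (Inl h) \<Rightarrow> ((\<lambda>p. if p \<in> E h then -1 else 0), - real (w h))
       | Some (Inr p) \<Rightarrow> ((\<lambda>q. if q = p then -1 else 0), 0))" for s
  define S where "S = insert None (Some ` Inl ` H \<union> Some ` Inr ` P)"
  have finS: "finite S" unfolding S_def using finH finP by auto
  have feasK: "feas P (F ` S)"
  proof (rule ccontr)
    assume nf: "\<not> feas P (F ` S)"
    obtain v where v: "v \<in> cone (F ` S)" "\<forall>i\<in>P. fst v i = 0" "snd v < 0"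
      using FM[OF finP _ nf] finS by auto
    obtain y where y: "\<forall>s. y s \<ge> 0" "\<forall>i. fst v i = (\<Sum>s\<in>S. y s * fst (F s) i)"
      "snd v = (\<Sum>s\<in>S. y s * snd (F s))"
      using cone_repr[OF v(1) finS] by blast
    define t where "t = y None"
    define yh where "yh h = y (Some (Inl h))" for h
    have t0: "t \<ge> 0" using y(1) unfolding t_def by auto
    have yh0: "yh h \<ge> 0" for h using y(1) unfolding yh_def by auto
    have pt: "(\<Sum>h\<in>H. if p \<in> E h then yh h else 0) \<le> t" if "p \<in> P" for p
    proof -
      have "0 = fst v p" using v(2) that by simp
      also have "\<dots> = (\<Sum>s\<in>S. y s * fst (F s) p)" using y(2) by simp
      also have "\<dots> = t + (\<Sum>h\<in>H. yh h * (if p \<in> E h then -1 else 0))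
          + (\<Sum>q\<in>P. y (Some (Inr q)) * (if p = q then -1 else 0))"
        unfolding S_def by (subst sum_split3[OF finH finP]) (simp add: F_def t_def yh_def)
      also have "(\<Sum>q\<in>P. y (Some (Inr q)) * (if p = q then -1 else 0)) = - y (Some (Inr p))"
        using finP that by (simp add: if_distrib cong: if_cong)
      also have "(\<Sum>h\<in>H. yh h * (if p \<in> E h then -1 else 0)) = - (\<Sum>h\<in>H. if p \<in> E h then yh h else 0)"
        by (simp add: sum_negf[symmetric] if_distrib cong: if_cong)
      moreover have "y (Some (Inr p)) \<ge> 0" using y(1) by blast
      ultimately show ?thesis by linarith
    qed
    have sv: "snd v = t * T - (\<Sum>h\<in>H. yh h * real (w h))"
      unfolding y(3) S_def
      by (subst sum_split3[OF finH finP]) (simp add: F_def t_def yh_def sum_negf)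
    have big: "(\<Sum>h\<in>H. yh h * real (w h)) > t * T" using sv v(3) by simp
    show False
    proof (cases "t = 0")
      case True
      have "yh h = 0" if h: "h \<in> H" for h
      proof -
        obtain p where p: "p \<in> L h" using Lne h by auto
        have pP: "p \<in> P" unfolding P_def using h p by auto
        have pE: "p \<in> E h" using LE h p by auto
        have "yh h = (if p \<in> E h then yh h else 0)" using pE by simp
        also have "\<dots> \<le> (\<Sum>h\<in>H. if p \<in> E h then yh h else 0)"
          using finH h yh0 by (intro member_le_sum) auto
        also have "\<dots> \<le> 0" using pt[OF pP] True by simp
        finally show ?thesis using yh0[of h] by simp
      qed
      then have "(\<Sum>h\<in>H. yh h * real (w h)) = 0" by simp
      then show False using big True by simp
    next
      case False
      then have tp: "t > 0" using t0 by simp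
      define f where "f h = yh h / t" for h
      have fpos: "\<forall>h\<in>H. f h \<ge> 0" using yh0 tp unfolding f_def by auto
      have frac: "\<forall>h\<in>H. \<forall>l\<in>L h. (\<Sum>h'\<in>H. if l \<in> E h' then f h' else 0) \<le> 1"
      proof (intro ballI)
        fix h l assume "h \<in> H" "l \<in> L h"
        then have lP: "l \<in> P" unfolding P_def by auto
        have "(\<Sum>h'\<in>H. if l \<in> E h' then f h' else 0) = (\<Sum>h'\<in>H. if l \<in> E h' then yh h' else 0) / t"
          unfolding f_def sum_divide_distrib by (intro sum.cong) auto
        also have "\<dots> \<le> 1" using pt[OF lP] tp by simp
        finally show "(\<Sum>h'\<in>H. if l \<in> E h' then f h' else 0) \<le> 1" .
      qed
      obtain M where M: "matching E H M" "(\<Sum>h\<in>H. f h * real (w h)) \<le> 2 * real d * (\<Sum>h\<in>M. real (w h))"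
      proof -
        have "\<exists>M. matching E H M \<and> (\<Sum>h\<in>H. f h * real (w h)) \<le> 2 * real d * (\<Sum>h\<in>M. real (w h))"
          by (rule LR[OF finH fpos _ Lfin inter frac Ene]) simp
        then show ?thesis using that by blast
      qed
      have "(\<Sum>h\<in>M. real (w h)) \<le> real (nu_w E H w)" by (rule nu_ge[OF finH M(1)])
      then have "2 * real d * (\<Sum>h\<in>M. real (w h)) \<le> 2 * real d * real (nu_w E H w)"
        by (intro mult_left_mono) auto
      then have "(\<Sum>h\<in>H. f h * real (w h)) \<le> T" unfolding T_def using M(2) by linarith
      moreover have "(\<Sum>h\<in>H. f h * real (w h)) = (\<Sum>h\<in>H. yh h * real (w h)) / t"
        unfolding f_def by (simp add: sum_divide_distrib)
      ultimately have "(\<Sum>h\<in>H. yh h * real (w h)) \<le> t * T" using tp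
        by (simp add: divide_le_eq mult.commute)
      then show False using big by simp
    qed
  qed
  then obtain x where x: "\<forall>k\<in>F ` S. (\<Sum>i\<in>P. fst k i * x i) \<le> snd k" unfolding feas_def by auto
  have xpos: "x p \<ge> 0" if "p \<in> P" for p
  proof -
    have "Some (Inr p) \<in> S" using that unfolding S_def by auto
    then have "(\<Sum>i\<in>P. fst (F (Some (Inr p))) i * x i) \<le> snd (F (Some (Inr p)))" using x by blast
    then have "(\<Sum>i\<in>P. (if i = p then -1 else 0) * x i) \<le> 0" unfolding F_def by simp
    moreover have "(\<Sum>i\<in>P. (if i = p then -1 else 0) * x i) = (\<Sum>i\<in>P. if i = p then - x i else 0)"
      by (intro sum.cong) auto
    moreover have "(\<Sum>i\<in>P. if i = p then - x i else 0) = - x p" using finP that by simp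
    ultimately show ?thesis by simp
  qed
  have xe: "(\<Sum>i\<in>P \<inter> E h. x i) \<ge> real (w h)" if "h \<in> H" for h
  proof -
    have "Some (Inl h) \<in> S" using that unfolding S_def by auto
    then have "(\<Sum>i\<in>P. fst (F (Some (Inl h))) i * x i) \<le> snd (F (Some (Inl h)))" using x by blast
    then have "(\<Sum>i\<in>P. (if i \<in> E h then -1 else 0) * x i) \<le> - real (w h)" unfolding F_def by simp
    moreover have "(\<Sum>i\<in>P. (if i \<in> E h then -1 else 0) * x i) = - (\<Sum>i\<in>P \<inter> E h. x i)"
    proof -
      have "(\<Sum>i\<in>P. (if i \<in> E h then -1 else 0) * x i) = (\<Sum>i\<in>P. - (if i \<in> E h then x i else 0))"
        by (intro sum.cong) auto
      also have "\<dots> = - (\<Sum>i\<in>P \<inter> E h. x i)"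
        using finP by (simp add: sum_negf sum.inter_restrict)
      finally show ?thesis .
    qed
    ultimately show ?thesis by simp
  qed
  have xc: "(\<Sum>i\<in>P. x i) \<le> T"
  proof -
    have "None \<in> S" unfolding S_def by auto
    then have "(\<Sum>i\<in>P. fst (F None) i * x i) \<le> snd (F None)" using x by blast
    then show ?thesis unfolding F_def by simp
  qed
  define g where "g v = (if v \<in> P then x v else 0)" for v
  have supp: "{v. g v \<noteq> 0} \<subseteq> P" unfolding g_def by auto
  have gc: "frac_cover E H w g"
    unfolding frac_cover_def
  proof (intro conjI allI ballI)
    show "finite {v. g v \<noteq> 0}" using supp finP finite_subset by auto
    fix v show "0 \<le> g v" using xpos unfolding g_def by auto
  next
    fix h assume h: "h \<in> H"
    have "(\<Sum>v\<in>E h \<inter> {v. g v \<noteq> 0}. g v) = (\<Sum>v\<in>P \<inter> E h. g v)"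
      using supp finP by (intro sum.mono_neutral_left) auto
    also have "\<dots> = (\<Sum>v\<in>P \<inter> E h. x v)" unfolding g_def by (intro sum.cong) auto
    finally show "real (w h) \<le> (\<Sum>v\<in>E h \<inter> {v. g v \<noteq> 0}. g v)" using xe[OF h] by simp
  qed
  have cost: "(\<Sum>v\<in>{v. g v \<noteq> 0}. g v) \<le> T"
  proof -
    have "(\<Sum>v\<in>{v. g v \<noteq> 0}. g v) = (\<Sum>v\<in>P. g v)"
      using supp finP by (intro sum.mono_neutral_left) auto
    also have "\<dots> = (\<Sum>v\<in>P. x v)" unfolding g_def by (intro sum.cong) auto
    finally show ?thesis using xc by simp
  qed
  have "tau_star_w E H w \<le> (\<Sum>v\<in>{v. g v \<noteq> 0}. g v)"
    unfolding tau_star_w_def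
  proof (rule cInf_lower)
    show "(\<Sum>v\<in>{v. g v \<noteq> 0}. g v) \<in> (\<lambda>g. \<Sum>v\<in>{v. g v \<noteq> 0}. g v) ` {g. frac_cover E H w g}"
      using gc by auto
    show "bdd_below ((\<lambda>g. \<Sum>v\<in>{v. g v \<noteq> 0}. g v) ` {g. frac_cover E H w g})"
      by (rule bdd_belowI[of _ 0]) (auto simp: frac_cover_def intro: sum_nonneg)
  qed
  then show ?thesis using cost unfolding T_def by simp
qed


end
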